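(* Let $(A,B)$ be an $n\times n$ Hermitian pencil, $\mu>0$, and let $(\widetilde A,\widetilde B)=(A+\mu Z_1,B+\mu Z_2)$ with $Z_1,Z_2$ independent samples from $\mathrm{GUE}(n)$. For any $t\ge0$, $$\mathbb{P}\left[\gamma(\widetilde A,\widetilde B)\ge\gamma(A,B)+t\right]\le e^{-\frac{nt^2}{4\mu^2}}.$$
   Context: A pencil $(A,B)$ is Hermitian if $A$ and $B$ are Hermitian; its Crawford number is $\gamma(A,B)=\min_{\|x\|_2=1}|x^H(A+iB)x|$. $\mathrm{GUE}(n)$ is the distribution of $Z=(G+G^H)/\sqrt2$ where $G$ is $n\times n$ with i.i.d. complex Gaussian entries of mean $0$ and variance $1/n$. *)

theory Defs
  imports "HOL-Probability.Probability"
begin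

definition hermitian :: "complex^'n^'n \<Rightarrow> bool" where
  "hermitian M \<longleftrightarrow> (\<forall>i j. M $ i $ j = cnj (M $ j $ i))"

definition qform :: "complex^'n^'n \<Rightarrow> complex^'n \<Rightarrow> complex" where
  "qform M x = (\<Sum>i\<in>UNIV. cnj (x $ i) * (M *v x) $ i)"

definition crawford :: "complex^'n^'n \<Rightarrow> complex^'n^'n \<Rightarrow> real" where
  "crawford A B = Inf {cmod (qform (\<chi> i j. A $ i $ j + \<i> * B $ i $ j) x) | x :: complex^'n. norm x = 1}"

text \<open>Complex Gaussian matrix G with i.i.d. entries of mean 0 and variance 1/n:
  real and imaginary parts are independent N(0, 1/(2n)).  The measure of G.\<close>
definition ginibre :: "(complex^'n^'n) measure" where
  "ginibre = distr
     (PiM (UNIV :: ('n \<times> 'n \<times> bool) set)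
        (\<lambda>_. density lborel (normal_density 0 (sqrt (1 / (2 * real CARD('n)))))))
     borel
     (\<lambda>g. \<chi> i j. Complex (g (i, j, True)) (g (i, j, False)))"

definition GUE :: "(complex^'n^'n) measure" where
  "GUE = distr ginibre borel
     (\<lambda>G. \<chi> i j. (G $ i $ j + cnj (G $ j $ i)) / complex_of_real (sqrt 2))"

end

theory Submission
  imports Defs
begin


lemma nn_integral_even_le:
  fixes f :: "real \<Rightarrow> ennreal"
  assumes [measurable]: "f \<in> borel_measurable borel" and ev: "\<And>x. f (-x) = f x"
  shows "(\<integral>\<^sup>+x. f x \<partial>lborel) \<le> 2 * (\<integral>\<^sup>+x. f x * indicator {0..} x \<partial>lborel)"
proof -
  have "(\<integral>\<^sup>+x. f x \<partial>lborel) = (\<integral>\<^sup>+x. f x * indicator {0..} x + f x * indicator {..<0} x \<partial>lborel)"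
    by (intro nn_integral_cong) (auto split: split_indicator)
  also have "\<dots> = (\<integral>\<^sup>+x. f x * indicator {0..} x \<partial>lborel) + (\<integral>\<^sup>+x. f x * indicator {..<0} x \<partial>lborel)"
    by (rule nn_integral_add) auto
  finally have 1: "(\<integral>\<^sup>+x. f x \<partial>lborel) = (\<integral>\<^sup>+x. f x * indicator {0..} x \<partial>lborel) + (\<integral>\<^sup>+x. f x * indicator {..<0} x \<partial>lborel)" .
  have "(\<integral>\<^sup>+x. f x * indicator {..<0} x \<partial>lborel) = (\<integral>\<^sup>+x. f (0 + (-1)*x) * indicator {..<0} (0 + (-1)*x) \<partial>lborel)"
    using nn_integral_real_affine[of "\<lambda>x. f x * indicator {..<0} x" "-1" 0] by simp
  also have "\<dots> \<le> (\<integral>\<^sup>+x. f x * indicator {0..} x \<partial>lborel)"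
    by (intro nn_integral_mono) (auto simp: ev split: split_indicator)
  finally have 2: "(\<integral>\<^sup>+x. f x * indicator {..<0} x \<partial>lborel) \<le> (\<integral>\<^sup>+x. f x * indicator {0..} x \<partial>lborel)" .
  show ?thesis unfolding 1 using 2 by (simp add: mult_2 add_left_mono)
qed

lemma exp_tend0:
  fixes k :: real assumes k: "0 < k"
  shows "((\<lambda>u. exp (- (u\<^sup>2 * k) / 2)) \<longlongrightarrow> 0) at_top"
proof -
  have "filterlim (\<lambda>u::real. u\<^sup>2) at_top at_top"
    by (intro filterlim_pow_at_top filterlim_ident) simp
  then have "filterlim (\<lambda>u::real. (k/2) * u\<^sup>2) at_top at_top"
    using k by (intro filterlim_tendsto_pos_mult_at_top[OF tendsto_const]) auto
  then have "filterlim (\<lambda>u::real. u\<^sup>2 * k / 2) at_top at_top"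
    by (simp add: field_simps)
  then have "filterlim (\<lambda>u::real. - (u\<^sup>2 * k / 2)) at_bot at_top"
    by (rule filterlim_compose[OF filterlim_uminus_at_bot_at_top])
  then show ?thesis
    by (intro filterlim_compose[OF exp_at_bot]) simp
qed

lemma inner_tail:
  fixes R s :: real assumes R: "0 \<le> R"
  shows "(\<integral>\<^sup>+u. ennreal (\<bar>u\<bar> / (2*pi) * exp (- (u\<^sup>2 * (1+s\<^sup>2)) / 2)) * indicator {x. R \<le> x} (u\<^sup>2 * (1+s\<^sup>2)) \<partial>lborel)
     \<le> 2 * ennreal (exp (-R/2) / (2*pi*(1+s\<^sup>2)))"
proof -
  define k where "k = 1 + s\<^sup>2"
  have k: "0 < k" unfolding k_def by (simp add: add_pos_nonneg)
  define b where "b = sqrt (R / k)"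
  have b0: "0 \<le> b" unfolding b_def using R k by simp
  have bsq: "b\<^sup>2 * k = R" unfolding b_def using R k by simp
  let ?g = "\<lambda>u. ennreal (\<bar>u\<bar> / (2*pi) * exp (- (u\<^sup>2 * k) / 2)) * indicator {x. R \<le> x} (u\<^sup>2 * k)"
  have "(\<integral>\<^sup>+u. ?g u \<partial>lborel) \<le> 2 * (\<integral>\<^sup>+u. ?g u * indicator {0..} u \<partial>lborel)"
    by (rule nn_integral_even_le) auto
  also have "(\<integral>\<^sup>+u. ?g u * indicator {0..} u \<partial>lborel) =
      (\<integral>\<^sup>+u. ennreal (u / (2*pi) * exp (- (u\<^sup>2 * k) / 2)) * indicator {b..} u \<partial>lborel)"
  proof (intro nn_integral_cong)
    fix u :: real
    have iff: "0 \<le> u \<Longrightarrow> (R \<le> u\<^sup>2 * k) = (b \<le> u)"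
    proof -
      assume u: "0 \<le> u"
      have "(b \<le> u) = (b\<^sup>2 \<le> u\<^sup>2)" using u b0 by (simp add: power_mono_iff)
      also have "\<dots> = (b\<^sup>2 * k \<le> u\<^sup>2 * k)" using k by simp
      finally show ?thesis using bsq by simp
    qed
    show "?g u * indicator {0..} u = ennreal (u / (2*pi) * exp (- (u\<^sup>2 * k) / 2)) * indicator {b..} u"
      using iff b0 by (cases "0 \<le> u") (auto split: split_indicator)
  qed
  also have "\<dots> = ennreal (0 - (- exp (- (b\<^sup>2 * k) / 2) / (2*pi*k)))"
  proof (rule nn_integral_FTC_atLeast)
    show "((\<lambda>u. - exp (- (u\<^sup>2 * k) / 2) / (2*pi*k)) \<longlongrightarrow> 0) at_top"
      using k tendsto_divide[OF tendsto_minus[OF exp_tend0[OF k]] tendsto_const[of "2*pi*k"]] by simp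
    fix x assume "b \<le> x"
    then show "0 \<le> x / (2 * pi) * exp (- (x\<^sup>2 * k) / 2)" using b0 by simp
    show "((\<lambda>u. - exp (- (u\<^sup>2 * k) / 2) / (2*pi*k)) has_real_derivative x / (2 * pi) * exp (- (x\<^sup>2 * k) / 2)) (at x)"
      using k by (auto intro!: derivative_eq_intros simp: field_simps)
  qed auto
  also have "\<dots> = ennreal (exp (-R/2) / (2*pi*(1+s\<^sup>2)))"
    using bsq by (simp add: k_def)
  finally show ?thesis unfolding k_def .
qed

lemma outer_tail:
  fixes c :: real assumes c: "0 \<le> c"
  shows "(\<integral>\<^sup>+s. 2 * ennreal (c / (2*pi*(1+s\<^sup>2))) \<partial>lborel) \<le> ennreal c"
proof -
  have "(\<integral>\<^sup>+s. 2 * ennreal (c / (2*pi*(1+s\<^sup>2))) \<partial>lborel) = 2 * (\<integral>\<^sup>+s. ennreal (c / (2*pi*(1+s\<^sup>2))) \<partial>lborel)"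
    by (rule nn_integral_cmult) auto
  also have "(\<integral>\<^sup>+s. ennreal (c / (2*pi*(1+s\<^sup>2))) \<partial>lborel) \<le> 2 * (\<integral>\<^sup>+s. ennreal (c / (2*pi*(1+s\<^sup>2))) * indicator {0..} s \<partial>lborel)"
    by (rule nn_integral_even_le) auto
  also have "(\<integral>\<^sup>+s. ennreal (c / (2*pi*(1+s\<^sup>2))) * indicator {0..} s \<partial>lborel) = ennreal (c/(2*pi) * (pi/2) - c/(2*pi) * arctan 0)"
  proof (rule nn_integral_FTC_atLeast)
    show "((\<lambda>s. c/(2*pi) * arctan s) \<longlongrightarrow> c/(2*pi) * (pi/2)) at_top"
      by (intro tendsto_intros tendsto_arctan_at_top)
    fix x :: real
    show "0 \<le> c / (2*pi*(1+x\<^sup>2))" using c by (simp add: add_pos_nonneg)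
    have "1 + x\<^sup>2 \<noteq> 0" by (smt (verit) zero_le_power2)
    have "((\<lambda>s. c/(2*pi) * arctan s) has_real_derivative c/(2*pi) * inverse (1+x\<^sup>2)) (at x)"
      by (intro DERIV_cmult DERIV_arctan)
    moreover have "c/(2*pi) * inverse (1+x\<^sup>2) = c / (2*pi*(1+x\<^sup>2))"
      by (metis divide_divide_eq_left divide_inverse)
    ultimately show "((\<lambda>s. c/(2*pi) * arctan s) has_real_derivative c / (2*pi*(1+x\<^sup>2))) (at x)"
      by metis
  qed auto
  finally have "(\<integral>\<^sup>+s. 2 * ennreal (c / (2*pi*(1+s\<^sup>2))) \<partial>lborel) \<le> 2 * (2 * ennreal (c / 4))"
    by (simp add: mult_left_mono)
  also have "2 * (2 * ennreal (c / 4)) = ennreal c"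
    using c by (simp add: ennreal_mult''[symmetric] ennreal_numeral[symmetric] del: ennreal_numeral)
  finally show ?thesis .
qed

lemma phi_prod:
  fixes u s :: real
  shows "std_normal_density u * std_normal_density (u * s) = 1/(2*pi) * exp (- (u\<^sup>2 * (1+s\<^sup>2)) / 2)"
proof -
  have a: "sqrt (2*pi) * sqrt (2*pi) = 2*pi" by simp
  have "std_normal_density u * std_normal_density (u * s) =
     1 / (sqrt (2*pi) * sqrt (2*pi)) * (exp (- u\<^sup>2 / 2) * exp (- (u * s)\<^sup>2 / 2))"
    unfolding std_normal_density_def by simp
  also have "exp (- u\<^sup>2 / 2) * exp (- (u * s)\<^sup>2 / 2) = exp (- u\<^sup>2 / 2 + - (u * s)\<^sup>2 / 2)"
    by (rule exp_add[symmetric])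
  also have "\<dots> = exp (- (u\<^sup>2 * (1+s\<^sup>2)) / 2)"
    by (rule arg_cong[where f=exp]) (simp add: power_mult_distrib field_simps)
  finally show ?thesis unfolding a .
qed

lemma gauss2_tail:
  fixes R :: real assumes R: "0 \<le> R"
  shows "(\<integral>\<^sup>+u. ennreal (std_normal_density u) * (\<integral>\<^sup>+v. ennreal (std_normal_density v) *
            indicator {p. R \<le> (fst p)\<^sup>2 + (snd p)\<^sup>2} (u,v) \<partial>lborel) \<partial>lborel) \<le> ennreal (exp (-R/2))"
proof -
  define S where "S = {p::real\<times>real. R \<le> (fst p)\<^sup>2 + (snd p)\<^sup>2}"
  have "closed S" unfolding S_def
    by (intro closed_Collect_le continuous_intros)
  then have [measurable]: "S \<in> sets borel" by (rule borel_closed)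
  define g where "g u s = ennreal (\<bar>u\<bar> / (2*pi) * exp (- (u\<^sup>2 * (1+s\<^sup>2)) / 2)) * indicator {x. R \<le> x} (u\<^sup>2 * (1+s\<^sup>2))" for u s :: real
  have step1: "ennreal (std_normal_density u) * (\<integral>\<^sup>+v. ennreal (std_normal_density v) * indicator S (u,v) \<partial>lborel)
      = (\<integral>\<^sup>+s. g u s \<partial>lborel)" if u: "u \<noteq> 0" for u
  proof -
    have "ennreal (std_normal_density u) * (\<integral>\<^sup>+v. ennreal (std_normal_density v) * indicator S (u,v) \<partial>lborel)
       = (\<integral>\<^sup>+v. ennreal (std_normal_density u) * (ennreal (std_normal_density v) * indicator S (u,v)) \<partial>lborel)"
      by (rule nn_integral_cmult[symmetric]) measurable
    also have "\<dots> = ennreal \<bar>u\<bar> * (\<integral>\<^sup>+s. ennreal (std_normal_density u) * (ennreal (std_normal_density (0 + u * s)) * indicator S (u,0 + u * s)) \<partial>lborel)"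
      by (rule nn_integral_real_affine) (use u in auto)
    also have "\<dots> = (\<integral>\<^sup>+s. ennreal \<bar>u\<bar> * (ennreal (std_normal_density u) * (ennreal (std_normal_density (0 + u * s)) * indicator S (u,0 + u * s))) \<partial>lborel)"
      by (rule nn_integral_cmult[symmetric]) measurable
    also have "\<dots> = (\<integral>\<^sup>+s. g u s \<partial>lborel)"
    proof (intro nn_integral_cong)
      fix s :: real
      have i: "indicator S (u, u * s) = (indicator {x. R \<le> x} (u\<^sup>2 * (1+s\<^sup>2)) :: ennreal)"
        unfolding S_def by (simp add: power_mult_distrib algebra_simps split: split_indicator)
      have r: "\<bar>u\<bar> * (std_normal_density u * std_normal_density (u * s)) = \<bar>u\<bar> / (2*pi) * exp (- (u\<^sup>2 * (1+s\<^sup>2)) / 2)"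
        unfolding phi_prod by simp
      show "ennreal \<bar>u\<bar> * (ennreal (std_normal_density u) * (ennreal (std_normal_density (0 + u * s)) * indicator S (u,0 + u * s))) = g u s"
        unfolding g_def i[symmetric] r[symmetric]
        by (simp add: ennreal_mult'' mult.assoc)
    qed
    finally show ?thesis .
  qed
  have "(\<integral>\<^sup>+u. ennreal (std_normal_density u) * (\<integral>\<^sup>+v. ennreal (std_normal_density v) * indicator S (u,v) \<partial>lborel) \<partial>lborel)
     = (\<integral>\<^sup>+u. (\<integral>\<^sup>+s. g u s \<partial>lborel) \<partial>lborel)"
    by (intro nn_integral_cong_AE eventually_mono[OF AE_lborel_singleton[of 0]]) (use step1 in auto)
  also have "\<dots> = (\<integral>\<^sup>+s. (\<integral>\<^sup>+u. g u s \<partial>lborel) \<partial>lborel)"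
  proof -
    have [measurable]: "(\<lambda>(u,s). g u s) \<in> borel_measurable (lborel \<Otimes>\<^sub>M lborel)"
      unfolding g_def by measurable
    show ?thesis using lborel_pair.Fubini'[of g] by simp
  qed
  also have "\<dots> \<le> (\<integral>\<^sup>+s. 2 * ennreal (exp (-R/2) / (2*pi*(1+s\<^sup>2))) \<partial>lborel)"
    by (intro nn_integral_mono) (unfold g_def, rule inner_tail[OF R])
  also have "\<dots> \<le> ennreal (exp (-R/2))"
    by (rule outer_tail) simp
  finally show ?thesis unfolding S_def .
qed




definition PP :: "('n \<times> 'n \<times> bool \<Rightarrow> real) measure" where
  "PP = PiM UNIV (\<lambda>_. density lborel (normal_density 0 (sqrt (1 / (2 * real CARD('n))))))"

definition Hf :: "('n \<times> 'n \<times> bool \<Rightarrow> real) \<Rightarrow> complex^'n^'n" where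
  "Hf g = (\<chi> i j. (Complex (g (i,j,True)) (g (i,j,False)) + cnj (Complex (g (j,i,True)) (g (j,i,False)))) / complex_of_real (sqrt 2))"

lemma sigma0_pos: "0 < sqrt (1 / (2 * real CARD('n::finite)))"
  by simp

lemma prob_PP: "prob_space (PP :: ('n::finite \<times> 'n \<times> bool \<Rightarrow> real) measure)"
  unfolding PP_def
  by (intro prob_space_PiM prob_space_normal_density sigma0_pos)

lemma sets_PP: "sets (PP :: ('n::finite \<times> 'n \<times> bool \<Rightarrow> real) measure) = sets borel"
proof -
  have "sets (PP :: ('n \<times> 'n \<times> bool \<Rightarrow> real) measure) = sets (PiM (UNIV :: ('n \<times> 'n \<times> bool) set) (\<lambda>_. borel :: real measure))"
    unfolding PP_def by (rule sets_PiM_cong) auto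
  also have "\<dots> = sets borel" by (rule sets_PiM_equal_borel)
  finally show ?thesis .
qed

lemma cont_Hf: "continuous_on UNIV (Hf :: ('n::finite \<times> 'n \<times> bool \<Rightarrow> real) \<Rightarrow> complex^'n^'n)"
  unfolding Hf_def Complex_eq
  by (intro continuous_intros continuous_on_product_coordinates[THEN continuous_on_compose2[where f="\<lambda>x. x"]]) auto

lemma meas_Hf[measurable]: "(Hf :: ('n::finite \<times> 'n \<times> bool \<Rightarrow> real) \<Rightarrow> complex^'n^'n) \<in> borel_measurable PP"
  using borel_measurable_continuous_onI[OF cont_Hf] measurable_cong_sets[OF sets_PP refl] by blast

lemma GUE_eq: "(GUE :: (complex^'n::finite^'n) measure) = distr PP borel Hf"
proof -
  let ?G = "\<lambda>g::('n \<times> 'n \<times> bool \<Rightarrow> real). (\<chi> i j. Complex (g (i, j, True)) (g (i, j, False))) :: complex^'n^'n"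
  let ?Z = "\<lambda>G::complex^'n^'n. (\<chi> i j. (G $ i $ j + cnj (G $ j $ i)) / complex_of_real (sqrt 2)) :: complex^'n^'n"
  have c1: "continuous_on UNIV ?G"
    unfolding Complex_eq
    by (intro continuous_intros continuous_on_product_coordinates[THEN continuous_on_compose2[where f="\<lambda>x. x"]]) auto
  have m1: "?G \<in> measurable PP borel"
    using borel_measurable_continuous_onI[OF c1] measurable_cong_sets[OF sets_PP refl] by blast
  have c2: "continuous_on UNIV ?Z"
    by (intro continuous_intros) auto
  have m2: "?Z \<in> measurable borel borel"
    using borel_measurable_continuous_onI[OF c2] by blast
  have "GUE = distr (distr PP borel ?G) borel ?Z"
    unfolding GUE_def ginibre_def PP_def ..
  also have "\<dots> = distr PP borel (?Z \<circ> ?G)"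
    by (rule distr_distr[OF m2 m1])
  also have "?Z \<circ> ?G = Hf"
    by (auto simp: Hf_def fun_eq_iff)
  finally show ?thesis .
qed


definition coef :: "complex^'n \<Rightarrow> 'n \<times> 'n \<times> bool \<Rightarrow> real" where
  "coef x k = (case k of (i,j,b) \<Rightarrow> if b then Re (cnj (x$i) * x$j) else - Im (cnj (x$i) * x$j))"

definition lin :: "complex^'n \<Rightarrow> ('n \<times> 'n \<times> bool \<Rightarrow> real) \<Rightarrow> real" where
  "lin x g = (\<Sum>k\<in>UNIV. coef x k * g k)"

lemma sum_triple:
  fixes f :: "'n::finite \<times> 'n \<times> bool \<Rightarrow> 'a::comm_monoid_add"
  shows "(\<Sum>k\<in>UNIV. f k) = (\<Sum>i\<in>UNIV. \<Sum>j\<in>UNIV. f (i,j,True) + f (i,j,False))"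
proof -
  have "(\<Sum>k\<in>UNIV. f k) = (\<Sum>k\<in>UNIV \<times> (UNIV \<times> UNIV). f k)" by simp
  also have "\<dots> = (\<Sum>i\<in>UNIV. \<Sum>r\<in>UNIV \<times> UNIV. f (i, r))"
    by (subst sum.cartesian_product) simp
  also have "\<dots> = (\<Sum>i\<in>UNIV. \<Sum>j\<in>UNIV. \<Sum>b\<in>UNIV. f (i, j, b))"
    by (intro sum.cong refl) (subst sum.cartesian_product, simp)
  also have "\<dots> = (\<Sum>i\<in>UNIV. \<Sum>j\<in>UNIV. f (i,j,True) + f (i,j,False))"
    by (simp add: UNIV_bool add.commute)
  finally show ?thesis .
qed

lemma qform_Hf:
  fixes x :: "complex^'n::finite"
  shows "qform (Hf g) x = complex_of_real (sqrt 2 * lin x g)"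
proof -
  define c where "c i j = Complex (g (i,j,True)) (g (i,j,False))" for i j
  define w where "w = (\<Sum>i\<in>UNIV. \<Sum>j\<in>UNIV. cnj (x$i) * c i j * x$j)"
  have "qform (Hf g) x = (\<Sum>i\<in>UNIV. \<Sum>j\<in>UNIV. cnj (x$i) * ((c i j + cnj (c j i)) / complex_of_real (sqrt 2)) * x$j)"
    unfolding qform_def Hf_def matrix_vector_mult_def c_def
    by (simp add: sum_distrib_left mult.assoc)
  also have "\<dots> = (w + (\<Sum>i\<in>UNIV. \<Sum>j\<in>UNIV. cnj (x$i) * cnj (c j i) * x$j)) / complex_of_real (sqrt 2)"
    unfolding w_def by (simp add: sum_divide_distrib sum.distrib[symmetric] algebra_simps)
  also have "(\<Sum>i\<in>UNIV. \<Sum>j\<in>UNIV. cnj (x$i) * cnj (c j i) * x$j) = (\<Sum>j\<in>UNIV. \<Sum>i\<in>UNIV. cnj (x$i) * cnj (c j i) * x$j)"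
    by (rule sum.swap)
  also have "\<dots> = cnj w"
    unfolding w_def by (simp add: mult.commute mult.left_commute)
  also have "w + cnj w = complex_of_real (2 * Re w)" by (rule complex_add_cnj)
  also have "Re w = lin x g"
  proof -
    have "Re w = (\<Sum>i\<in>UNIV. \<Sum>j\<in>UNIV. Re (cnj (x$i) * x$j) * g (i,j,True) - Im (cnj (x$i) * x$j) * g (i,j,False))"
      unfolding w_def c_def Re_sum by (intro sum.cong refl) (simp add: algebra_simps)
    also have "\<dots> = lin x g"
      unfolding lin_def sum_triple by (intro sum.cong refl) (simp add: coef_def algebra_simps)
    finally show ?thesis .
  qed
  finally have q: "qform (Hf g) x = complex_of_real (2 * lin x g) / complex_of_real (sqrt 2)" .
  have e: "2 * lin x g / sqrt 2 = sqrt 2 * lin x g"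
    by (simp add: field_simps)
  show ?thesis unfolding q of_real_divide[symmetric] e ..
qed

lemma sum_sq_norm: "(\<Sum>i\<in>UNIV. (cmod (x$i))\<^sup>2) = (norm (x :: complex^'n::finite))\<^sup>2"
  unfolding norm_vec_def L2_set_def by (simp add: sum_nonneg)

lemma coef_sq:
  fixes x :: "complex^'n::finite" assumes "norm x = 1"
  shows "(\<Sum>k\<in>UNIV. (coef x k)\<^sup>2) = 1"
proof -
  have pt: "(Re (cnj a * b))\<^sup>2 + (Im (cnj a * b))\<^sup>2 = (cmod a)\<^sup>2 * (cmod b)\<^sup>2" for a b :: complex
    by (simp only: cmod_power2[symmetric] norm_mult complex_mod_cnj power_mult_distrib)
  have "(\<Sum>k\<in>UNIV. (coef x k)\<^sup>2) = (\<Sum>i\<in>UNIV. \<Sum>j\<in>UNIV. (cmod (x$i))\<^sup>2 * (cmod (x$j))\<^sup>2)"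
    unfolding sum_triple by (intro sum.cong refl) (simp only: coef_def prod.case if_True if_False power2_minus pt)
  also have "\<dots> = (\<Sum>i\<in>UNIV. (cmod (x$i))\<^sup>2) * (\<Sum>j\<in>UNIV. (cmod (x$j))\<^sup>2)"
    by (simp add: sum_product)
  also have "\<dots> = 1" using assms by (simp add: sum_sq_norm)
  finally show ?thesis .
qed

lemma coord_meas[measurable]: "(\<lambda>g. g k) \<in> borel_measurable (PP :: ('n::finite \<times> 'n \<times> bool \<Rightarrow> real) measure)"
proof -
  have "(\<lambda>g. g k) \<in> borel_measurable (borel :: ('n \<times> 'n \<times> bool \<Rightarrow> real) measure)"
    by (intro borel_measurable_continuous_onI continuous_on_product_coordinates)
  then show ?thesis using measurable_cong_sets[OF sets_PP refl] by blast
qed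

lemma coord_distr:
  "distr (PP :: ('n::finite \<times> 'n \<times> bool \<Rightarrow> real) measure) lborel (\<lambda>g. g k) = density lborel (normal_density 0 (sqrt (1 / (2 * real CARD('n)))))"
proof -
  let ?M = "density lborel (normal_density 0 (sqrt (1 / (2 * real CARD('n)))))"
  have "distr (PP :: ('n \<times> 'n \<times> bool \<Rightarrow> real) measure) lborel (\<lambda>g. g k) = distr PP ?M (\<lambda>g. g k)"
    by (rule distr_cong) auto
  also have "\<dots> = ?M" unfolding PP_def
    by (rule distr_PiM_component) (auto intro!: prob_space_normal_density)
  finally show ?thesis .
qed

lemma coord_distributed:
  "distributed (PP :: ('n::finite \<times> 'n \<times> bool \<Rightarrow> real) measure) lborel (\<lambda>g. g k) (normal_density 0 (sqrt (1 / (2 * real CARD('n)))))"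
  unfolding distributed_def coord_distr by auto

lemma coord_indep:
  "prob_space.indep_vars (PP :: ('n::finite \<times> 'n \<times> bool \<Rightarrow> real) measure) (\<lambda>_. borel) (\<lambda>k g. g k) UNIV"
proof -
  interpret prob_space "PP :: ('n \<times> 'n \<times> bool \<Rightarrow> real) measure" by (rule prob_PP)
  have l: "distr PP (PiM UNIV (\<lambda>_. borel)) (\<lambda>x. \<lambda>i\<in>UNIV. x i) = (PP :: ('n \<times> 'n \<times> bool \<Rightarrow> real) measure)"
  proof -
    have "(\<lambda>x::('n \<times> 'n \<times> bool \<Rightarrow> real). \<lambda>i\<in>UNIV. x i) = (\<lambda>x. x)" by (auto simp: fun_eq_iff)
    moreover have "sets (PiM (UNIV :: ('n \<times> 'n \<times> bool) set) (\<lambda>_. borel :: real measure)) = sets PP"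
      using sets_PP sets_PiM_equal_borel by metis
    ultimately show ?thesis using distr_id2 by metis
  qed
  have r: "PiM UNIV (\<lambda>i. distr PP borel (\<lambda>x. x i)) = (PP :: ('n \<times> 'n \<times> bool \<Rightarrow> real) measure)"
  proof -
    have "distr PP borel (\<lambda>x. x i) = distr (PP :: ('n \<times> 'n \<times> bool \<Rightarrow> real) measure) lborel (\<lambda>x. x i)" for i
      by (rule distr_cong) auto
    then have e: "distr (PP :: ('n \<times> 'n \<times> bool \<Rightarrow> real) measure) borel (\<lambda>x. x i) = density lborel (normal_density 0 (sqrt (1 / (2 * real CARD('n)))))" for i
      unfolding coord_distr by simp
    show ?thesis unfolding e by (simp add: PP_def)
  qed
  show ?thesis
    by (subst indep_vars_iff_distr_eq_PiM) (auto simp: l r)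
qed

definition stdv :: "complex^'n \<Rightarrow> ('n \<times> 'n \<times> bool \<Rightarrow> real) \<Rightarrow> real" where
  "stdv x g = sqrt (2 * real CARD('n)) * lin x g"

lemma qform_Hf_stdv:
  fixes x :: "complex^'n::finite"
  shows "qform (Hf g) x = complex_of_real (stdv x g / sqrt (real CARD('n)))"
proof -
  have "sqrt 2 * lin x g = stdv x g / sqrt (real CARD('n))"
    unfolding stdv_def by (simp add: real_sqrt_mult)
  then show ?thesis by (simp add: qform_Hf)
qed

lemma stdv_distributed:
  fixes x :: "complex^'n::finite" assumes x: "norm x = 1"
  shows "distributed (PP :: ('n \<times> 'n \<times> bool \<Rightarrow> real) measure) lborel (stdv x) std_normal_density"
proof -
  interpret prob_space "PP :: ('n \<times> 'n \<times> bool \<Rightarrow> real) measure" by (rule prob_PP)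
  define N where "N = real CARD('n)"
  have N: "0 < N" unfolding N_def by simp
  define s0 where "s0 = sqrt (1 / (2 * N))"
  have s0: "0 < s0" unfolding s0_def using N by simp
  define d where "d k = sqrt (2 * N) * coef x k" for k
  define I where "I = {k. coef x k \<noteq> 0}"
  have fin: "finite I" by simp
  have ne: "I \<noteq> {}"
  proof
    assume "I = {}"
    then have "\<And>k. coef x k = 0" unfolding I_def by auto
    then show False using coef_sq[OF x] by simp
  qed
  have dnz: "d k \<noteq> 0" if "k \<in> I" for k using that N unfolding I_def d_def by simp
  have ind: "indep_vars (\<lambda>_. borel) (\<lambda>k g. d k * g k) I"
    using indep_vars_subset[OF indep_vars_compose2[OF coord_indep, of "\<lambda>k y. d k * y" "\<lambda>_. borel"]]
    by auto
  have dist: "distributed PP lborel (\<lambda>g. d k * g k) (normal_density 0 (\<bar>d k\<bar> * s0))" if "k \<in> I" for k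
    using normal_density_affine[OF coord_distributed[of k, folded N_def, folded s0_def] s0 dnz[OF that], of 0]
    by simp
  have "distributed PP lborel (\<lambda>g. \<Sum>k\<in>I. d k * g k) (normal_density (\<Sum>k\<in>I. 0) (sqrt (\<Sum>k\<in>I. (\<bar>d k\<bar> * s0)\<^sup>2)))"
    by (rule sum_indep_normal[OF fin ne ind]) (use s0 dnz dist in auto)
  moreover have "(\<Sum>k\<in>I. (\<bar>d k\<bar> * s0)\<^sup>2) = 1"
  proof -
    have "(\<Sum>k\<in>I. (\<bar>d k\<bar> * s0)\<^sup>2) = (\<Sum>k\<in>I. (coef x k)\<^sup>2)"
      using N by (intro sum.cong refl) (simp add: d_def s0_def power_mult_distrib)
    also have "\<dots> = (\<Sum>k\<in>UNIV. (coef x k)\<^sup>2)"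
      by (rule sum.mono_neutral_left) (auto simp: I_def)
    finally show ?thesis using coef_sq[OF x] by simp
  qed
  moreover have "(\<lambda>g. \<Sum>k\<in>I. d k * g k) = stdv x"
  proof
    fix g
    have "(\<Sum>k\<in>I. d k * g k) = (\<Sum>k\<in>UNIV. d k * g k)"
      by (rule sum.mono_neutral_left) (auto simp: I_def d_def)
    then show "(\<Sum>k\<in>I. d k * g k) = stdv x g"
      unfolding stdv_def lin_def d_def N_def by (simp add: sum_distrib_left mult.assoc)
  qed
  ultimately show ?thesis by simp
qed

lemma qform_expand: "qform M x = (\<Sum>i\<in>UNIV. \<Sum>j\<in>UNIV. cnj (x$i) * M$i$j * x$j)"
  by (simp add: qform_def matrix_vector_mult_def sum_distrib_left mult.assoc)

lemma qform_cont: "continuous_on UNIV (\<lambda>x. qform M x)"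
  unfolding qform_expand by (intro continuous_intros)

lemma qform_pert:
  fixes A B Z1 Z2 :: "complex^'n::finite^'n" and \<mu> :: real
  shows "qform (\<chi> i j. (A + \<mu> *\<^sub>R Z1) $ i $ j + \<i> * (B + \<mu> *\<^sub>R Z2) $ i $ j) x
    = qform (\<chi> i j. A $ i $ j + \<i> * B $ i $ j) x + complex_of_real \<mu> * (qform Z1 x + \<i> * qform Z2 x)"
proof -
  have pt: "cnj (x$i) * ((A + \<mu> *\<^sub>R Z1) $ i $ j + \<i> * (B + \<mu> *\<^sub>R Z2) $ i $ j) * x$j
     = cnj (x$i) * (A $ i $ j + \<i> * B $ i $ j) * x$j + complex_of_real \<mu> * (cnj (x$i) * Z1$i$j * x$j + \<i> * (cnj (x$i) * Z2$i$j * x$j))" for i j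
    unfolding vector_add_component vector_scaleR_component
    by (simp add: scaleR_conv_of_real algebra_simps)
  show ?thesis
    unfolding qform_expand vec_lambda_beta pt
    by (simp only: sum.distrib sum_distrib_left distrib_left)
qed

lemma tail_iff:
  fixes N \<mu> t p q :: real assumes "0 < N" "0 < \<mu>" "0 \<le> t"
  shows "(t \<le> \<mu> * sqrt ((p / sqrt N)\<^sup>2 + (q / sqrt N)\<^sup>2)) = (N * t\<^sup>2 / \<mu>\<^sup>2 \<le> p\<^sup>2 + q\<^sup>2)"
proof -
  have e: "(p / sqrt N)\<^sup>2 + (q / sqrt N)\<^sup>2 = (p\<^sup>2 + q\<^sup>2) / N"
    using assms by (simp add: power_divide add_divide_distrib)
  have "(t \<le> \<mu> * sqrt ((p / sqrt N)\<^sup>2 + (q / sqrt N)\<^sup>2)) = (t / \<mu> \<le> sqrt ((p\<^sup>2 + q\<^sup>2) / N))"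
    unfolding e using assms(2) by (simp add: pos_divide_le_eq mult.commute)
  also have "t / \<mu> = sqrt ((t / \<mu>)\<^sup>2)" using assms by simp
  also have "(sqrt ((t / \<mu>)\<^sup>2) \<le> sqrt ((p\<^sup>2 + q\<^sup>2) / N)) = ((t / \<mu>)\<^sup>2 \<le> (p\<^sup>2 + q\<^sup>2) / N)"
    by (rule real_sqrt_le_iff)
  also have "\<dots> = (N * t\<^sup>2 / \<mu>\<^sup>2 \<le> p\<^sup>2 + q\<^sup>2)"
    using assms(1) by (simp add: power_divide pos_le_divide_eq mult.commute)
  finally show ?thesis .
qed

theorem proposition3p12:
  fixes A B :: "complex^'n^'n" and \<mu> t :: real
  assumes "hermitian A" and "hermitian B" and "\<mu> > 0" and "t \<ge> 0"
  shows "measure ((GUE :: (complex^'n^'n) measure) \<Otimes>\<^sub>M (GUE :: (complex^'n^'n) measure))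
           {(Z1, Z2) \<in> space (GUE \<Otimes>\<^sub>M GUE).
              crawford (A + \<mu> *\<^sub>R Z1) (B + \<mu> *\<^sub>R Z2) \<ge> crawford A B + t}
         \<le> exp (- (real CARD('n) * t\<^sup>2) / (4 * \<mu>\<^sup>2))"
proof -
  note mu = \<open>\<mu> > 0\<close> and t = \<open>t \<ge> 0\<close>
  define C :: "complex^'n^'n" where "C = (\<chi> i j. A $ i $ j + \<i> * B $ i $ j)"
  define f where "f x = cmod (qform C x)" for x :: "complex^'n"
  have cf: "continuous_on UNIV f" unfolding f_def by (intro continuous_intros qform_cont)
  have cpt: "compact (f ` sphere 0 1)"
    by (rule compact_continuous_image) (use cf continuous_on_subset in auto)
  have ne: "f ` sphere 0 1 \<noteq> {}" by simp
  obtain m where m: "m \<in> f ` sphere 0 1" "\<And>y. y \<in> f ` sphere 0 1 \<Longrightarrow> m \<le> y"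
    using compact_attains_inf[OF cpt ne] by blast
  obtain x0 where x0: "norm x0 = 1" "m = f x0" using m(1) by auto
  have set_eq: "{cmod (qform C x) | x. norm x = 1} = f ` sphere 0 1" by (auto simp: f_def)
  have cr: "crawford A B = f x0"
    unfolding crawford_def C_def[symmetric] set_eq
    by (rule cInf_eq_minimum) (use m x0 in auto)
  have bound: "crawford (A + \<mu> *\<^sub>R Z1) (B + \<mu> *\<^sub>R Z2) \<le> crawford A B + \<mu> * cmod (qform Z1 x0 + \<i> * qform Z2 x0)"
    for Z1 Z2 :: "complex^'n^'n"
  proof -
    let ?C' = "\<chi> i j. (A + \<mu> *\<^sub>R Z1) $ i $ j + \<i> * (B + \<mu> *\<^sub>R Z2) $ i $ j"
    have "crawford (A + \<mu> *\<^sub>R Z1) (B + \<mu> *\<^sub>R Z2) \<le> cmod (qform ?C' x0)"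
      unfolding crawford_def
      by (rule cInf_lower) (use x0 in \<open>auto intro!: bdd_belowI[where m=0]\<close>)
    also have "\<dots> = cmod (qform C x0 + complex_of_real \<mu> * (qform Z1 x0 + \<i> * qform Z2 x0))"
      unfolding qform_pert C_def ..
    also have "\<dots> \<le> cmod (qform C x0) + cmod (complex_of_real \<mu> * (qform Z1 x0 + \<i> * qform Z2 x0))"
      by (rule norm_triangle_ineq)
    also have "\<dots> = crawford A B + \<mu> * cmod (qform Z1 x0 + \<i> * qform Z2 x0)"
      using mu by (simp add: cr f_def norm_mult)
    finally show ?thesis .
  qed
  define N where "N = real CARD('n)"
  have N: "0 < N" unfolding N_def by simp
  define R where "R = N * t\<^sup>2 / \<mu>\<^sup>2"
  have R: "0 \<le> R" unfolding R_def using N by simp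
  define a :: "('n \<times> 'n \<times> bool \<Rightarrow> real) \<Rightarrow> real" where "a = stdv x0"
  define S where "S = {p::real\<times>real. R \<le> (fst p)\<^sup>2 + (snd p)\<^sup>2}"
  have "closed S" unfolding S_def by (intro closed_Collect_le continuous_intros)
  then have SB: "S \<in> sets borel" by (rule borel_closed)
  let ?D = "density lborel (\<lambda>x. ennreal (std_normal_density x))"
  have Dist: "distributed PP lborel a std_normal_density"
    unfolding a_def by (rule stdv_distributed[OF x0(1)])
  have distrA: "distr PP lborel a = ?D" using Dist unfolding distributed_def by auto
  have ma: "a \<in> measurable PP lborel" using Dist unfolding distributed_def by auto
  interpret P: prob_space "PP :: ('n \<times> 'n \<times> bool \<Rightarrow> real) measure" by (rule prob_PP)
  have GUE: "(GUE :: (complex^'n^'n) measure) = distr PP borel Hf" by (rule GUE_eq)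
  have pG: "prob_space (GUE :: (complex^'n^'n) measure)" unfolding GUE
    by (rule P.prob_space_distr) simp
  interpret GG: prob_space "(GUE :: (complex^'n^'n) measure) \<Otimes>\<^sub>M (GUE :: (complex^'n^'n) measure)"
    by (rule prob_space_pair[OF pG pG])
  have spGG: "space ((GUE :: (complex^'n^'n) measure) \<Otimes>\<^sub>M (GUE :: (complex^'n^'n) measure)) = UNIV"
    by (simp add: space_pair_measure GUE)
  define T where "T = {p \<in> space ((GUE :: (complex^'n^'n) measure) \<Otimes>\<^sub>M (GUE :: (complex^'n^'n) measure)). t \<le> \<mu> * cmod (qform (fst p) x0 + \<i> * qform (snd p) x0)}"
  have Tclosed: "closed {p :: (complex^'n^'n) \<times> (complex^'n^'n). t \<le> \<mu> * cmod (qform (fst p) x0 + \<i> * qform (snd p) x0)}"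
    unfolding qform_expand by (intro closed_Collect_le continuous_intros)
  have setsGG0: "sets ((GUE :: (complex^'n^'n) measure) \<Otimes>\<^sub>M (GUE :: (complex^'n^'n) measure)) = sets (borel \<Otimes>\<^sub>M borel)"
    by (rule sets_pair_measure_cong) (simp_all add: GUE)
  have setsGG: "sets ((GUE :: (complex^'n^'n) measure) \<Otimes>\<^sub>M (GUE :: (complex^'n^'n) measure)) = sets (borel :: ((complex^'n^'n) \<times> (complex^'n^'n)) measure)"
    unfolding setsGG0 borel_prod ..
  have Tm: "T \<in> sets ((GUE :: (complex^'n^'n) measure) \<Otimes>\<^sub>M (GUE :: (complex^'n^'n) measure))"
    unfolding T_def spGG setsGG using borel_closed[OF Tclosed] by simp
  have sub: "{(Z1, Z2) \<in> space ((GUE :: (complex^'n^'n) measure) \<Otimes>\<^sub>M (GUE :: (complex^'n^'n) measure)).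
              crawford (A + \<mu> *\<^sub>R Z1) (B + \<mu> *\<^sub>R Z2) \<ge> crawford A B + t} \<subseteq> T"
  proof (clarsimp simp: T_def spGG)
    fix Z1 Z2 :: "complex^'n^'n"
    assume "crawford A B + t \<le> crawford (A + \<mu> *\<^sub>R Z1) (B + \<mu> *\<^sub>R Z2)"
    then show "t \<le> \<mu> * cmod (qform Z1 x0 + \<i> * qform Z2 x0)"
      using bound[of Z1 Z2] by linarith
  qed
  have m1: "measure ((GUE :: (complex^'n^'n) measure) \<Otimes>\<^sub>M (GUE :: (complex^'n^'n) measure)) {(Z1, Z2) \<in> space ((GUE :: (complex^'n^'n) measure) \<Otimes>\<^sub>M (GUE :: (complex^'n^'n) measure)).
              crawford (A + \<mu> *\<^sub>R Z1) (B + \<mu> *\<^sub>R Z2) \<ge> crawford A B + t}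
      \<le> measure ((GUE :: (complex^'n^'n) measure) \<Otimes>\<^sub>M (GUE :: (complex^'n^'n) measure)) T"
    by (rule GG.finite_measure_mono[OF sub Tm])
  have key: "(t \<le> \<mu> * cmod (qform (Hf g) x0 + \<i> * qform (Hf h) x0)) = (R \<le> (a g)\<^sup>2 + (a h)\<^sup>2)" for g h
  proof -
    have "qform (Hf g) x0 + \<i> * qform (Hf h) x0 = Complex (a g / sqrt N) (a h / sqrt N)"
      unfolding qform_Hf_stdv a_def N_def Complex_eq by simp
    then show ?thesis
      using tail_iff[OF N mu t, of "a g" "a h"] by (simp add: R_def complex_norm)
  qed
  have mH: "(\<lambda>(x,y). (Hf x, Hf y)) \<in> measurable (PP \<Otimes>\<^sub>M PP) (borel \<Otimes>\<^sub>M (borel :: (complex^'n^'n) measure))"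
    by measurable
  have mA: "(\<lambda>(x,y). (a x, a y)) \<in> measurable (PP \<Otimes>\<^sub>M PP) (lborel \<Otimes>\<^sub>M lborel)"
    using ma by measurable
  have sfH: "sigma_finite_measure (distr PP borel (Hf :: _ \<Rightarrow> complex^'n^'n))"
    using pG unfolding GUE by (rule prob_space_imp_sigma_finite)
  have pD: "prob_space ?D" by (rule prob_space_normal_density) simp
  have sfD: "sigma_finite_measure ?D" using pD by (rule prob_space_imp_sigma_finite)
  have sfA: "sigma_finite_measure (distr PP lborel a)" unfolding distrA by (rule sfD)
  have S1: "S \<in> sets (lborel \<Otimes>\<^sub>M lborel)" unfolding lborel_prod using SB by simp
  have S2: "S \<in> sets (?D \<Otimes>\<^sub>M ?D)" using S1 sets_pair_measure_cong[of ?D lborel ?D lborel] by simp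
  have S3: "S \<in> sets (lborel \<Otimes>\<^sub>M ?D)" using S1 sets_pair_measure_cong[of lborel lborel ?D lborel] by simp
  have TB: "T \<in> sets (borel \<Otimes>\<^sub>M (borel :: (complex^'n^'n) measure))" using Tm setsGG0 by simp
  have "emeasure ((GUE :: (complex^'n^'n) measure) \<Otimes>\<^sub>M (GUE :: (complex^'n^'n) measure)) T
      = emeasure (distr (PP \<Otimes>\<^sub>M PP) (borel \<Otimes>\<^sub>M borel) (\<lambda>(x,y). (Hf x, Hf y))) T"
    unfolding GUE pair_measure_distr[OF meas_Hf meas_Hf sfH] ..
  also have "\<dots> = emeasure (PP \<Otimes>\<^sub>M PP) ((\<lambda>(x,y). (Hf x, Hf y)) -` T \<inter> space (PP \<Otimes>\<^sub>M PP))"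
    by (rule emeasure_distr[OF mH TB])
  also have "(\<lambda>(x,y). (Hf x, Hf y)) -` T \<inter> space (PP \<Otimes>\<^sub>M PP) = (\<lambda>(x,y). (a x, a y)) -` S \<inter> space (PP \<Otimes>\<^sub>M PP)"
    by (auto simp: T_def S_def spGG key)
  also have "emeasure (PP \<Otimes>\<^sub>M PP) \<dots> = emeasure (distr (PP \<Otimes>\<^sub>M PP) (lborel \<Otimes>\<^sub>M lborel) (\<lambda>(x,y). (a x, a y))) S"
    by (rule emeasure_distr[symmetric, OF mA S1])
  also have "distr (PP \<Otimes>\<^sub>M PP) (lborel \<Otimes>\<^sub>M lborel) (\<lambda>(x,y). (a x, a y)) = ?D \<Otimes>\<^sub>M ?D"
    using pair_measure_distr[OF ma ma sfA] distrA by simp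
  also have "emeasure (?D \<Otimes>\<^sub>M ?D) S = (\<integral>\<^sup>+u. emeasure ?D (Pair u -` S) \<partial>?D)"
    by (rule sigma_finite_measure.emeasure_pair_measure_alt[OF sfD S2])
  also have "\<dots> = (\<integral>\<^sup>+u. ennreal (std_normal_density u) * emeasure ?D (Pair u -` S) \<partial>lborel)"
  proof (rule nn_integral_density)
    show "(\<lambda>u. emeasure ?D (Pair u -` S)) \<in> borel_measurable lborel"
      by (rule sigma_finite_measure.measurable_emeasure_Pair[OF sfD S3])
  qed simp
  also have "\<dots> = (\<integral>\<^sup>+u. ennreal (std_normal_density u) * (\<integral>\<^sup>+v. ennreal (std_normal_density v) * indicator S (u,v) \<partial>lborel) \<partial>lborel)"
  proof (intro nn_integral_cong arg_cong2[where f="(*)"] refl)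
    fix u :: real
    have "Pair u -` S \<in> sets borel" using sets_Pair1[OF S1] by simp
    then show "emeasure ?D (Pair u -` S) = (\<integral>\<^sup>+v. ennreal (std_normal_density v) * indicator S (u,v) \<partial>lborel)"
      by (subst emeasure_density) (auto intro!: nn_integral_cong simp: indicator_def)
  qed
  also have "\<dots> \<le> ennreal (exp (-R/2))"
    using gauss2_tail[OF R] unfolding S_def .
  finally have em: "emeasure ((GUE :: (complex^'n^'n) measure) \<Otimes>\<^sub>M (GUE :: (complex^'n^'n) measure)) T \<le> ennreal (exp (-R/2))" .
  then have "measure ((GUE :: (complex^'n^'n) measure) \<Otimes>\<^sub>M (GUE :: (complex^'n^'n) measure)) T \<le> exp (-R/2)"
    by (simp add: GG.emeasure_eq_measure)
  also have "exp (-R/2) \<le> exp (- (real CARD('n) * t\<^sup>2) / (4 * \<mu>\<^sup>2))"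
  proof -
    have X: "0 \<le> N * t\<^sup>2 / \<mu>\<^sup>2" using N by simp
    have "- (real CARD('n) * t\<^sup>2) / (4 * \<mu>\<^sup>2) = - (N * t\<^sup>2 / \<mu>\<^sup>2) / 4"
      unfolding N_def by (simp add: field_simps)
    moreover have "-R/2 = - (N * t\<^sup>2 / \<mu>\<^sup>2) / 2" unfolding R_def ..
    ultimately show ?thesis using X by simp
  qed
  finally show ?thesis using m1 by linarith
qed


end
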